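(* Let $(Z,Y)$ be random with $Z\in[0,1]$, $Y\in\{0,1\}$, let $g:[0,1]\to[0,1]$, let $\alpha\ge1$, and let $\mathcal{B}=\{I_1,\dots,I_B\}$ be an $\alpha$-well-balanced binning scheme of size $B$ (with respect to $g(Z)$). Then $\mathrm{MSE}(g_{\mathcal{B}})\le \mathrm{MSE}(g)+\frac{2\alpha}{B}$.
   Context: A binning scheme of size $B$ is a set of intervals $I_1,\dots,I_B$ partitioning $[0,1]$; $\beta(z)$ is the index $j$ with $z\in I_j$. It is $\alpha$-well-balanced if $\frac{1}{\alpha B}\le\Pr(g(Z)\in I_j)\le\frac{\alpha}{B}$ for all $j$. $g_{\mathcal{B}}(z)=\mathbb{E}[g(Z)\mid g(Z)\in I_{\beta(g(z))}]$ and $\mathrm{MSE}(h)=\mathbb{E}[(h(Z)-Y)^2]$. *)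

theory Defs
  imports "HOL-Probability.Probability"
begin

definition binning_scheme :: "(nat \<Rightarrow> real set) \<Rightarrow> nat \<Rightarrow> bool" where
  "binning_scheme I B \<longleftrightarrow> B \<ge> 1
     \<and> (\<forall>j\<in>{1..B}. is_interval (I j))
     \<and> (\<forall>i\<in>{1..B}. \<forall>j\<in>{1..B}. i \<noteq> j \<longrightarrow> I i \<inter> I j = {})
     \<and> (\<Union>j\<in>{1..B}. I j) = {0..1}"

definition bin_index :: "(nat \<Rightarrow> real set) \<Rightarrow> nat \<Rightarrow> real \<Rightarrow> nat" where
  "bin_index I B z = (THE j. j \<in> {1..B} \<and> z \<in> I j)"

definition well_balanced ::
  "'a measure \<Rightarrow> ('a \<Rightarrow> real) \<Rightarrow> real \<Rightarrow> (nat \<Rightarrow> real set) \<Rightarrow> nat \<Rightarrow> bool" where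
  "well_balanced M X \<alpha> I B \<longleftrightarrow>
     (\<forall>j\<in>{1..B}. 1 / (\<alpha> * real B) \<le> measure M {\<omega> \<in> space M. X \<omega> \<in> I j}
                 \<and> measure M {\<omega> \<in> space M. X \<omega> \<in> I j} \<le> \<alpha> / real B)"

definition cond_exp_event :: "'a measure \<Rightarrow> ('a \<Rightarrow> real) \<Rightarrow> 'a set \<Rightarrow> real" where
  "cond_exp_event M X A = (\<integral>\<omega>. X \<omega> * indicator A \<omega> \<partial>M) / measure M A"

definition binned :: "'a measure \<Rightarrow> ('a \<Rightarrow> real) \<Rightarrow> (real \<Rightarrow> real) \<Rightarrow> (nat \<Rightarrow> real set) \<Rightarrow> nat
    \<Rightarrow> real \<Rightarrow> real" where
  "binned M Z g I B z = cond_exp_event M (\<lambda>\<omega>. g (Z \<omega>))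
      {\<omega> \<in> space M. g (Z \<omega>) \<in> I (bin_index I B (g z))}"

definition MSE :: "'a measure \<Rightarrow> ('a \<Rightarrow> real) \<Rightarrow> ('a \<Rightarrow> real) \<Rightarrow> (real \<Rightarrow> real) \<Rightarrow> real" where
  "MSE M Z Y h = (\<integral>\<omega>. (h (Z \<omega>) - Y \<omega>)\<^sup>2 \<partial>M)"

end

theory Submission
  imports Defs
begin

lemma width_le_measure:
  fixes S :: "real set"
  assumes "is_interval S" "S \<noteq> {}" "S \<subseteq> {0..1}"
  shows "Sup S - Inf S \<le> measure lborel S"
    and "\<And>x. x \<in> S \<Longrightarrow> Inf S \<le> x \<and> x \<le> Sup S"
    and "0 \<le> Inf S" "Sup S \<le> 1"
proof -
  show "0 \<le> Inf S" using assms(2,3) by (intro cInf_greatest) auto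
  show "Sup S \<le> 1" using assms(2,3) by (intro cSup_least) auto
  have bdd1: "bdd_below S" using assms(3) by (meson atLeastAtMost_iff bdd_below_def subsetD)
  have bdd2: "bdd_above S" using assms(3) by (meson atLeastAtMost_iff bdd_above_def subsetD)
  show "\<And>x. x \<in> S \<Longrightarrow> Inf S \<le> x \<and> x \<le> Sup S"
    using bdd1 bdd2 by (auto intro: cInf_lower cSup_upper)
  have sub: "{Inf S<..<Sup S} \<subseteq> S"
  proof
    fix x assume x: "x \<in> {Inf S<..<Sup S}"
    obtain s1 where "s1 \<in> S" "s1 < x" using x assms(2) bdd1 by (auto simp: cInf_less_iff)
    moreover obtain s2 where "s2 \<in> S" "x < s2" using x assms(2) bdd2 by (auto simp: less_cSup_iff)
    ultimately show "x \<in> S" using assms(1) unfolding is_interval_1 by (meson less_imp_le)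
  qed
  have Sb: "S \<in> sets borel" using assms(1) by (rule real_interval_borel_measurable)
  have "{0..1::real} \<in> fmeasurable lborel" by (intro fmeasurableI) auto
  then have "S \<in> fmeasurable lborel"
    by (rule fmeasurableI2[of "{0..1}"]) (use assms Sb \<open>{0..1::real} \<in> fmeasurable lborel\<close> in auto)
  then have "measure lborel {Inf S<..<Sup S} \<le> measure lborel S"
    using sub by (intro measure_mono_fmeasurable) auto
  moreover have "Inf S \<le> Sup S" using bdd1 bdd2 assms(2) by (meson cInf_le_cSup)
  ultimately show "Sup S - Inf S \<le> measure lborel S" by simp
qed

lemma sq_diff_bound:
  fixes m x y w :: real
  assumes "m \<in> {0..1}" "x \<in> {0..1}" "y \<in> {0..1}" "\<bar>m - x\<bar> \<le> w"
  shows "(m - y)\<^sup>2 - (x - y)\<^sup>2 \<le> 2 * w"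
proof -
  have e: "(m - y)\<^sup>2 - (x - y)\<^sup>2 = (m - x) * (m + x - 2 * y)" by (simp add: power2_eq_square algebra_simps)
  have "(m - x) * (m + x - 2 * y) \<le> \<bar>m - x\<bar> * \<bar>m + x - 2 * y\<bar>"
    by (metis abs_ge_self abs_mult)
  also have "\<dots> \<le> w * 2"
    using assms by (intro mult_mono) auto
  finally show ?thesis using e by simp
qed

theorem mainTheorem6:
  fixes M :: "'a measure" and Z Y :: "'a \<Rightarrow> real" and g :: "real \<Rightarrow> real"
    and \<alpha> :: real and I :: "nat \<Rightarrow> real set" and B :: nat
  assumes "prob_space M"
    and "Z \<in> borel_measurable M" and "Y \<in> borel_measurable M"
    and "\<forall>\<omega>\<in>space M. Z \<omega> \<in> {0..1}"
    and "\<forall>\<omega>\<in>space M. Y \<omega> \<in> {0, 1}"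
    and "g \<in> borel_measurable borel"
    and "\<forall>z\<in>{0..1}. g z \<in> {0..1}"
    and "\<alpha> \<ge> 1"
    and "binning_scheme I B"
    and "well_balanced M (\<lambda>\<omega>. g (Z \<omega>)) \<alpha> I B"
  shows "MSE M Z Y (binned M Z g I B) \<le> MSE M Z Y g + 2 * \<alpha> / real B"
proof -
  interpret P: prob_space M by fact
  define X where "X = (\<lambda>\<omega>. g (Z \<omega>))"
  have Xm: "X \<in> borel_measurable M"
    unfolding X_def using assms(2,6) by (rule measurable_compose)
  have X01: "X \<omega> \<in> {0..1}" if "\<omega> \<in> space M" for \<omega>
    using assms(4,7) that unfolding X_def by blast
  have Y01: "Y \<omega> \<in> {0..1}" if "\<omega> \<in> space M" for \<omega>
    using assms(5) that by auto
  have B1: "B \<ge> 1" and intv: "\<And>j. j \<in> {1..B} \<Longrightarrow> is_interval (I j)"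
    and disj: "\<And>i j. i \<in> {1..B} \<Longrightarrow> j \<in> {1..B} \<Longrightarrow> i \<noteq> j \<Longrightarrow> I i \<inter> I j = {}"
    and un: "(\<Union>j\<in>{1..B}. I j) = {0..1}"
    using assms(9) unfolding binning_scheme_def by auto
  define A where "A j = {\<omega> \<in> space M. X \<omega> \<in> I j}" for j
  have Asets: "A j \<in> sets M" if "j \<in> {1..B}" for j
  proof -
    have "X -` I j \<inter> space M \<in> sets M"
      by (rule measurable_sets[OF Xm real_interval_borel_measurable[OF intv[OF that]]])
    then show ?thesis unfolding A_def by (simp add: vimage_def Int_def conj_commute)
  qed
  have Aspace: "A j \<inter> space M = A j" for j by (auto simp: A_def)
  define p where "p j = measure M (A j)" for j
  have Bpos: "real B > 0" using B1 by simp
  have apos: "\<alpha> > 0" using assms(8) by simp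
  have pbounds: "1 / (\<alpha> * real B) \<le> p j \<and> p j \<le> \<alpha> / real B" if "j \<in> {1..B}" for j
    using assms(10) that unfolding well_balanced_def p_def A_def X_def by blast
  have ppos: "p j > 0" if "j \<in> {1..B}" for j
  proof -
    have "1 / (\<alpha> * real B) > 0" using Bpos apos by simp
    then show ?thesis using pbounds[OF that] by linarith
  qed
  have Ine: "I j \<noteq> {}" if "j \<in> {1..B}" for j
  proof
    assume "I j = {}"
    then have "A j = {}" unfolding A_def by auto
    then show False using ppos[OF that] unfolding p_def by simp
  qed
  have Isub: "I j \<subseteq> {0..1}" if "j \<in> {1..B}" for j
    using un that by blast
  define a where "a j = Inf (I j)" for j
  define b where "b j = Sup (I j)" for j
  have ab: "a j \<le> x \<and> x \<le> b j" if "j \<in> {1..B}" "x \<in> I j" for j x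
    unfolding a_def b_def using width_le_measure(2)[OF intv[OF that(1)] Ine[OF that(1)] Isub[OF that(1)] that(2)] .
  have wid: "b j - a j \<le> measure lborel (I j)" if "j \<in> {1..B}" for j
    unfolding a_def b_def using width_le_measure(1)[OF intv[OF that] Ine[OF that] Isub[OF that]] .
  define m where "m j = cond_exp_event M X (A j)" for j
  have intXA: "integrable M (\<lambda>\<omega>. X \<omega> * indicator (A j) \<omega>)" if "j \<in> {1..B}" for j
    by (rule P.integrable_const_bound[where B=1])
       (use X01 Xm Asets[OF that] in \<open>auto simp: indicator_def\<close>)
  have intA: "integrable M (\<lambda>\<omega>. c * indicator (A j) \<omega> :: real)" if "j \<in> {1..B}" for j c
    by (rule P.integrable_const_bound[where B="\<bar>c\<bar>"])
       (use Asets[OF that] in \<open>auto simp: indicator_def\<close>)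
  have mab: "a j \<le> m j \<and> m j \<le> b j" if j: "j \<in> {1..B}" for j
  proof -
    have "(\<integral>\<omega>. a j * indicator (A j) \<omega> \<partial>M) \<le> (\<integral>\<omega>. X \<omega> * indicator (A j) \<omega> \<partial>M)"
      by (rule integral_mono[OF intA[OF j] intXA[OF j]])
         (use ab[OF j] in \<open>auto simp: indicator_def A_def\<close>)
    moreover have "(\<integral>\<omega>. X \<omega> * indicator (A j) \<omega> \<partial>M) \<le> (\<integral>\<omega>. b j * indicator (A j) \<omega> \<partial>M)"
      by (rule integral_mono[OF intXA[OF j] intA[OF j]])
         (use ab[OF j] in \<open>auto simp: indicator_def A_def\<close>)
    moreover have "(\<integral>\<omega>. c * indicator (A j) \<omega> \<partial>M) = c * p j" for c
      using Asets[OF j] by (simp add: p_def Aspace)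
    ultimately have "a j * p j \<le> m j * p j \<and> m j * p j \<le> b j * p j"
      using ppos[OF j] unfolding m_def cond_exp_event_def p_def by (simp add: Aspace)
    then show ?thesis using ppos[OF j] by (simp add: mult_le_cancel_right)
  qed
  have uniq: "\<exists>!j. j \<in> {1..B} \<and> X \<omega> \<in> I j" if om: "\<omega> \<in> space M" for \<omega>
  proof -
    obtain j where "j \<in> {1..B}" "X \<omega> \<in> I j" using X01[OF om] un by blast
    then show ?thesis using disj by blast
  qed
  have binj: "bin_index I B (X \<omega>) = j" if "\<omega> \<in> space M" "j \<in> {1..B}" "X \<omega> \<in> I j" for \<omega> j
    unfolding bin_index_def by (rule the1_equality[OF uniq[OF that(1)]]) (use that in auto)
  have a0: "0 \<le> a j" and b1: "b j \<le> 1" if "j \<in> {1..B}" for j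
    unfolding a_def b_def using width_le_measure(3,4)[OF intv[OF that] Ine[OF that] Isub[OF that]] by auto
  have bin_eq: "binned M Z g I B (Z \<omega>) = m j"
    if "\<omega> \<in> space M" "j \<in> {1..B}" "X \<omega> \<in> I j" for \<omega> j
  proof -
    have "binned M Z g I B (Z \<omega>) = cond_exp_event M X (A (bin_index I B (X \<omega>)))"
      by (simp add: binned_def X_def A_def)
    then show ?thesis using binj[OF that] by (simp add: m_def)
  qed
  have sumsel: "(\<Sum>i\<in>{1..B}. c i * indicator (A i) \<omega>) = (c j :: real)"
    if "\<omega> \<in> space M" "j \<in> {1..B}" "X \<omega> \<in> I j" for \<omega> j c
  proof -
    have "(\<Sum>i\<in>{1..B}. c i * indicator (A i) \<omega>) = (\<Sum>i\<in>{1..B}. if i = j then c i else 0)"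
    proof (rule sum.cong)
      fix i assume i: "i \<in> {1..B}"
      show "c i * indicator (A i) \<omega> = (if i = j then c i else 0)"
      proof (cases "i = j")
        case True then show ?thesis using that by (simp add: A_def)
      next
        case False
        then have "X \<omega> \<notin> I i" using disj[OF i that(2)] that(3) by blast
        then show ?thesis using False by (simp add: A_def)
      qed
    qed simp
    also have "\<dots> = c j" using that(2) by simp
    finally show ?thesis .
  qed
  define G where "G \<omega> = (\<Sum>j\<in>{1..B}. m j * indicator (A j) \<omega>)" for \<omega>
  define W where "W \<omega> = (\<Sum>j\<in>{1..B}. (b j - a j) * indicator (A j) \<omega>)" for \<omega>
  have pt: "(G \<omega> - Y \<omega>)\<^sup>2 - (X \<omega> - Y \<omega>)\<^sup>2 \<le> 2 * W \<omega>"
    and Gb: "G \<omega> \<in> {0..1}" and Wb: "W \<omega> \<in> {0..1}"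
    and Geq: "binned M Z g I B (Z \<omega>) = G \<omega>" if om: "\<omega> \<in> space M" for \<omega>
  proof -
    obtain j where j: "j \<in> {1..B}" "X \<omega> \<in> I j" using uniq[OF om] by blast
    have G1: "G \<omega> = m j" unfolding G_def by (rule sumsel[OF om j])
    have W1: "W \<omega> = b j - a j" unfolding W_def by (rule sumsel[OF om j])
    have m01: "m j \<in> {0..1}" using mab[OF j(1)] a0[OF j(1)] b1[OF j(1)] by auto
    show "G \<omega> \<in> {0..1}" using G1 m01 by simp
    show "W \<omega> \<in> {0..1}" using W1 mab[OF j(1)] a0[OF j(1)] b1[OF j(1)] by auto
    show "binned M Z g I B (Z \<omega>) = G \<omega>" using G1 bin_eq[OF om j] by simp
    have "\<bar>m j - X \<omega>\<bar> \<le> b j - a j" using mab[OF j(1)] ab[OF j] by auto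
    then have "(m j - Y \<omega>)\<^sup>2 - (X \<omega> - Y \<omega>)\<^sup>2 \<le> 2 * (b j - a j)"
      by (rule sq_diff_bound[OF m01 X01[OF om] Y01[OF om]])
    then show "(G \<omega> - Y \<omega>)\<^sup>2 - (X \<omega> - Y \<omega>)\<^sup>2 \<le> 2 * W \<omega>"
      using G1 W1 by simp
  qed
  have [measurable]: "A j \<in> sets M" if "j \<in> {1..B}" for j using Asets[OF that] .
  have Gm: "G \<in> borel_measurable M" unfolding G_def
    by (intro borel_measurable_sum borel_measurable_times borel_measurable_const
        borel_measurable_indicator Asets) auto
  have Wm: "W \<in> borel_measurable M" unfolding W_def
    by (intro borel_measurable_sum borel_measurable_times borel_measurable_const
        borel_measurable_indicator Asets) auto
  have gy: "\<bar>G \<omega> - Y \<omega>\<bar> \<le> 1" "\<bar>X \<omega> - Y \<omega>\<bar> \<le> 1" if "\<omega> \<in> space M" for \<omega>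
    using Gb[OF that] X01[OF that] Y01[OF that] by auto
  have int1: "integrable M (\<lambda>\<omega>. (G \<omega> - Y \<omega>)\<^sup>2)"
    by (rule P.integrable_const_bound[where B=1])
       (use gy Gm assms(3) in \<open>auto intro!: AE_I2 simp: abs_square_le_1\<close>)
  have int2: "integrable M (\<lambda>\<omega>. (X \<omega> - Y \<omega>)\<^sup>2)"
    by (rule P.integrable_const_bound[where B=1])
       (use gy Xm assms(3) in \<open>auto intro!: AE_I2 simp: abs_square_le_1\<close>)
  have int3: "integrable M W"
    by (rule P.integrable_const_bound[where B=1]) (use Wb Wm in \<open>auto intro!: AE_I2\<close>)
  have "MSE M Z Y (binned M Z g I B) = (\<integral>\<omega>. (G \<omega> - Y \<omega>)\<^sup>2 \<partial>M)"
    unfolding MSE_def by (rule Bochner_Integration.integral_cong) (simp_all add: Geq)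
  moreover have "MSE M Z Y g = (\<integral>\<omega>. (X \<omega> - Y \<omega>)\<^sup>2 \<partial>M)"
    unfolding MSE_def X_def ..
  moreover have "(\<integral>\<omega>. (G \<omega> - Y \<omega>)\<^sup>2 \<partial>M) - (\<integral>\<omega>. (X \<omega> - Y \<omega>)\<^sup>2 \<partial>M)
      = (\<integral>\<omega>. (G \<omega> - Y \<omega>)\<^sup>2 - (X \<omega> - Y \<omega>)\<^sup>2 \<partial>M)"
    using int1 int2 by simp
  moreover have "(\<integral>\<omega>. (G \<omega> - Y \<omega>)\<^sup>2 - (X \<omega> - Y \<omega>)\<^sup>2 \<partial>M) \<le> (\<integral>\<omega>. 2 * W \<omega> \<partial>M)"
    by (rule integral_mono) (use int1 int2 int3 pt in auto)
  moreover have "(\<integral>\<omega>. 2 * W \<omega> \<partial>M) = 2 * (\<Sum>j\<in>{1..B}. (b j - a j) * p j)"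
  proof -
    have "(\<integral>\<omega>. W \<omega> \<partial>M) = (\<Sum>j\<in>{1..B}. (\<integral>\<omega>. (b j - a j) * indicator (A j) \<omega> \<partial>M))"
      unfolding W_def by (rule Bochner_Integration.integral_sum) (rule intA)
    also have "\<dots> = (\<Sum>j\<in>{1..B}. (b j - a j) * p j)"
      by (rule sum.cong) (use Asets in \<open>simp_all add: p_def Aspace\<close>)
    finally show ?thesis using int3 by simp
  qed
  moreover have "(\<Sum>j\<in>{1..B}. (b j - a j) * p j) \<le> \<alpha> / real B"
  proof -
    have "(\<Sum>j\<in>{1..B}. (b j - a j) * p j) \<le> (\<Sum>j\<in>{1..B}. (b j - a j) * (\<alpha> / real B))"
    proof (rule sum_mono)
      fix j assume j: "j \<in> {1..B}"
      have "a j \<le> b j" using ab[OF j] Ine[OF j] by force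
      then show "(b j - a j) * p j \<le> (b j - a j) * (\<alpha> / real B)"
        using pbounds[OF j] by (intro mult_left_mono) auto
    qed
    also have "\<dots> = (\<alpha> / real B) * (\<Sum>j\<in>{1..B}. b j - a j)"
      by (simp add: sum_distrib_left mult.commute)
    also have "\<dots> \<le> (\<alpha> / real B) * (\<Sum>j\<in>{1..B}. measure lborel (I j))"
      using apos Bpos by (intro mult_left_mono sum_mono wid) auto
    also have "(\<Sum>j\<in>{1..B}. measure lborel (I j)) = measure lborel (\<Union>j\<in>{1..B}. I j)"
    proof (rule measure_finite_Union[symmetric])
      show "I ` {1..B} \<subseteq> sets lborel" using intv real_interval_borel_measurable by auto
      show "disjoint_family_on I {1..B}" using disj unfolding disjoint_family_on_def by blast
      fix j assume j: "j \<in> {1..B}"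
      have "emeasure lborel (I j) \<le> emeasure lborel {0..1::real}"
        using Isub[OF j] by (intro emeasure_mono) auto
      then show "emeasure lborel (I j) \<noteq> \<infinity>" by (auto simp: top_unique)
    qed simp
    also have "\<dots> = 1" using un by simp
    finally show ?thesis by simp
  qed
  ultimately have "MSE M Z Y (binned M Z g I B) - MSE M Z Y g \<le> 2 * (\<alpha> / real B)"
    by linarith
  then show ?thesis by simp
qed
end
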